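(* Let $(x,y,z,t)\in\mathbb{C}^4$ and $\lambda,\mu\in\mathbb{C}\setminus\{0\}$. Let $((x_n,y_n,z_n,t_n))_n$ be the optimal F sequence starting from $(x,y,z,t)$ and $((x'_n,y'_n,z'_n,t'_n))_n$ the optimal F sequence starting from $(\lambda x,\lambda y,\mu z,\mu t)$. Assume $z_\infty=\lim z_n$ and $z'_\infty=\lim z'_n$ exist and are nonzero, and that $L=\lim_n (x_n/z_\infty)^{2^n}$ and $L'=\lim_n (x'_n/z'_\infty)^{2^n}$ exist with $L\neq0$. Then $$\mu=\frac{z'_\infty}{z_\infty},\qquad \lambda=\frac{L'\,z'_\infty}{L\,z_\infty}.$$
   Context: Optimal F sequence: given $(x_0,y_0,z_0,t_0)\in\mathbb{C}^4$, define recursively $$(x_{n+1},y_{n+1},z_{n+1},t_{n+1})=\Big(\tfrac{\sqrt{x_n}\sqrt{z_n}+\sqrt{y_n}\sqrt{t_n}}{2},\ \tfrac{\sqrt{x_n}\sqrt{t_n}+\sqrt{y_n}\sqrt{z_n}}{2},\ \tfrac{z_n+t_n}{2},\ \sqrt{z_n}\sqrt{t_n}\Big),$$ where at each rank the square roots are chosen "good": $\Re\sqrt{x_n}\ge0$, $\Re\sqrt{z_n}\ge0$; either $|\sqrt{x_n}-\sqrt{y_n}|<|\sqrt{x_n}+\sqrt{y_n}|$ or equality and $\Im(\sqrt{y_n}/\sqrt{x_n})>0$; either $|\sqrt{z_n}-\sqrt{t_n}|<|\sqrt{z_n}+\sqrt{t_n}|$ or equality and $\Im(\sqrt{t_n}/\sqrt{z_n})>0$.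 *)

theory Defs
  imports Complex_Main
begin

definition good_roots :: "complex \<Rightarrow> complex \<Rightarrow> complex \<Rightarrow> complex \<Rightarrow> bool" where
  "good_roots u v a b \<longleftrightarrow> a^2 = u \<and> b^2 = v \<and> Re a \<ge> 0 \<and>
     (cmod (a - b) < cmod (a + b) \<or> (cmod (a - b) = cmod (a + b) \<and> Im (b / a) > 0))"

definition optimal_F_seq ::
  "complex \<Rightarrow> complex \<Rightarrow> complex \<Rightarrow> complex \<Rightarrow>
   (nat \<Rightarrow> complex) \<Rightarrow> (nat \<Rightarrow> complex) \<Rightarrow> (nat \<Rightarrow> complex) \<Rightarrow> (nat \<Rightarrow> complex) \<Rightarrow> bool" where
  "optimal_F_seq x0 y0 z0 t0 xs ys zs ts \<longleftrightarrow>
     xs 0 = x0 \<and> ys 0 = y0 \<and> zs 0 = z0 \<and> ts 0 = t0 \<and>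
     (\<forall>n. \<exists>a b c d. good_roots (xs n) (ys n) a b \<and> good_roots (zs n) (ts n) c d \<and>
        xs (Suc n) = (a * c + b * d) / 2 \<and>
        ys (Suc n) = (a * d + b * c) / 2 \<and>
        zs (Suc n) = (zs n + ts n) / 2 \<and>
        ts (Suc n) = c * d)"

end

theory Submission
  imports Defs
begin

lemma good_nz: "good_roots u v a b \<Longrightarrow> a \<noteq> 0"
  unfolding good_roots_def by auto

lemma good_scale:
  assumes g: "good_roots u v a b" and g': "good_roots (k*u) (k*v) a' b'" and k: "k \<noteq> 0"
  shows "\<exists>r. r^2 = k \<and> a' = r*a \<and> b' = r*b"
proof -
  have a0: "a \<noteq> 0" using good_nz[OF g] .
  define r where "r = a'/a"
  have ar: "a' = r*a" using a0 by (simp add: r_def)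
  have u: "u = a^2" "v = b^2" using g by (auto simp: good_roots_def)
  have "a'^2 = k*u" "b'^2 = k*v" using g' by (auto simp: good_roots_def)
  hence "r^2 * a^2 = k * a^2" using ar u by (simp add: power_mult_distrib)
  hence r2: "r^2 = k" using a0 by simp
  hence r0: "r \<noteq> 0" using k by auto
  have "b'^2 = (r*b)^2" using \<open>b'^2 = k*v\<close> u r2 by (simp add: power_mult_distrib)
  hence "(b' - r*b) * (b' + r*b) = 0" by (simp add: algebra_simps power2_eq_square)
  hence "b' - r*b = 0 \<or> b' + r*b = 0" by simp
  hence "b' = r*b \<or> b' = -(r*b)" by (auto simp: eq_neg_iff_add_eq_0)
  moreover have "b' \<noteq> -(r*b)"
  proof
    assume bb: "b' = -(r*b)"
    have e1: "cmod (a' - b') = cmod r * cmod (a + b)"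
      using ar bb by (simp add: algebra_simps norm_mult[symmetric])
    have e2: "cmod (a' + b') = cmod r * cmod (a - b)"
      using ar bb by (simp add: algebra_simps norm_mult[symmetric])
    have q: "b'/a' = -(b/a)" using ar bb r0 a0 by (simp add: field_simps)
    have pr: "cmod r > 0" using r0 by simp
    have c1: "cmod (a - b) < cmod (a + b) \<or> (cmod (a - b) = cmod (a + b) \<and> Im (b / a) > 0)"
      using g by (simp add: good_roots_def)
    have c2: "cmod (a' - b') < cmod (a' + b') \<or> (cmod (a' - b') = cmod (a' + b') \<and> Im (b' / a') > 0)"
      using g' by (simp add: good_roots_def)
    from c2 have "cmod (a + b) < cmod (a - b) \<or> (cmod (a + b) = cmod (a - b) \<and> Im (b / a) < 0)"
      unfolding e1 e2 q using pr by auto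
    with c1 show False by auto
  qed
  ultimately show ?thesis using r2 ar by blast
qed

theorem mainTheorem8:
  fixes x y z t lam mu zinf zinf' L L' :: complex
    and xs ys zs ts xs' ys' zs' ts' :: "nat \<Rightarrow> complex"
  assumes "lam \<noteq> 0" and "mu \<noteq> 0"
    and "optimal_F_seq x y z t xs ys zs ts"
    and "optimal_F_seq (lam * x) (lam * y) (mu * z) (mu * t) xs' ys' zs' ts'"
    and "zs \<longlonglongrightarrow> zinf" and "zs' \<longlonglongrightarrow> zinf'"
    and "zinf \<noteq> 0" and "zinf' \<noteq> 0"
    and "(\<lambda>n. (xs n / zinf) ^ (2 ^ n)) \<longlonglongrightarrow> L"
    and "(\<lambda>n. (xs' n / zinf') ^ (2 ^ n)) \<longlonglongrightarrow> L'"
    and "L \<noteq> 0"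
  shows "mu = zinf' / zinf \<and> lam = (L' * zinf') / (L * zinf)"
proof -
  note O = assms(3)[unfolded optimal_F_seq_def] and O' = assms(4)[unfolded optimal_F_seq_def]
  have key: "\<exists>l. xs' n = l * xs n \<and> ys' n = l * ys n \<and> zs' n = mu * zs n \<and> ts' n = mu * ts n
     \<and> l^(2^n) * mu = lam * mu^(2^n)" for n
  proof (induction n)
    case 0 then show ?case using O O' by (intro exI[of _ lam]) auto
  next
    case (Suc n)
    then obtain l where l: "xs' n = l * xs n" "ys' n = l * ys n" "zs' n = mu * zs n" "ts' n = mu * ts n"
      "l^(2^n) * mu = lam * mu^(2^n)" by blast
    have l0: "l \<noteq> 0" proof
      assume "l = 0" hence "lam * mu^(2^n) = 0" using l(5) by (simp add: power_0_left)
      thus False using assms(1,2) by simp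
    qed
    obtain a b c d where A: "good_roots (xs n) (ys n) a b" "good_roots (zs n) (ts n) c d"
      "xs (Suc n) = (a * c + b * d) / 2" "ys (Suc n) = (a * d + b * c) / 2"
      "zs (Suc n) = (zs n + ts n) / 2" "ts (Suc n) = c * d" using O by blast
    obtain a' b' c' d' where B: "good_roots (xs' n) (ys' n) a' b'" "good_roots (zs' n) (ts' n) c' d'"
      "xs' (Suc n) = (a' * c' + b' * d') / 2" "ys' (Suc n) = (a' * d' + b' * c') / 2"
      "zs' (Suc n) = (zs' n + ts' n) / 2" "ts' (Suc n) = c' * d'" using O' by blast
    obtain r where r: "r^2 = l" "a' = r*a" "b' = r*b"
      using good_scale[OF A(1) _ l0] B(1) l by auto
    obtain s where s: "s^2 = mu" "c' = s*c" "d' = s*d"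
      using good_scale[OF A(2) _ assms(2)] B(2) l by auto
    have "(r*s)^(2^Suc n) * mu = (r^2)^(2^n) * (s^2)^(2^n) * mu"
      by (simp add: power_mult power_mult_distrib[symmetric] mult.commute)
    also have "\<dots> = lam * mu^(2^Suc n)" using r(1) s(1) l(5)
      by (simp add: power_mult power2_eq_square algebra_simps)
    finally have e: "(r*s)^(2^Suc n) * mu = lam * mu^(2^Suc n)" .
    have "xs' (Suc n) = (r*s) * ((a * c + b * d) / 2)" unfolding B(3) r(2,3) s(2,3) by (simp add: algebra_simps)
    hence "xs' (Suc n) = (r*s) * xs (Suc n)" by (simp only: A(3))
    moreover have "ys' (Suc n) = (r*s) * ((a * d + b * c) / 2)" unfolding B(4) r(2,3) s(2,3) by (simp add: algebra_simps)
    hence "ys' (Suc n) = (r*s) * ys (Suc n)" by (simp only: A(4))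
    moreover have "zs' (Suc n) = mu * ((zs n + ts n) / 2)" unfolding B(5) l(3,4) by (simp add: algebra_simps)
    hence "zs' (Suc n) = mu * zs (Suc n)" by (simp only: A(5))
    moreover have "ts' (Suc n) = mu * ts (Suc n)" using A(6) B(6) s by (simp add: algebra_simps power2_eq_square)
    ultimately show ?case using e by blast
  qed
  have zz: "zs' = (\<lambda>n. mu * zs n)" using key by blast
  have "zs' \<longlonglongrightarrow> mu * zinf" unfolding zz by (intro tendsto_intros assms(5))
  hence zi: "zinf' = mu * zinf" using assms(6) LIMSEQ_unique by blast
  have seq: "(xs' n / zinf')^(2^n) = (lam/mu) * (xs n / zinf)^(2^n)" for n
  proof -
    obtain l where l: "xs' n = l * xs n" "l^(2^n) * mu = lam * mu^(2^n)" using key by blast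
    have "(xs' n / zinf')^(2^n) = (l^(2^n) * mu) * (xs n / zinf)^(2^n) / (mu * mu^(2^n))"
      using assms(2) unfolding l(1) zi by (simp add: power_mult_distrib power_divide field_simps)
    also have "\<dots> = (lam/mu) * (xs n / zinf)^(2^n)" unfolding l(2) using assms(2) by (simp add: field_simps)
    finally show ?thesis .
  qed
  have "(\<lambda>n. (xs' n / zinf')^(2^n)) \<longlonglongrightarrow> (lam/mu) * L"
    unfolding seq by (intro tendsto_intros assms(9))
  hence LL: "L' = (lam/mu) * L" using assms(10) LIMSEQ_unique by blast
  show ?thesis using zi LL assms(2,7,11) by (auto simp: field_simps)
qed

end
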